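(* For $\ell\ge1$, let $\mathrm{EXACT}_2^\ell:\{0,1\}^{4\ell}\to\{0,1\}$ be defined by splitting the input $x$ into consecutive blocks $b_1,\dots,b_\ell$ of 4 bits each and setting $\mathrm{EXACT}_2^\ell(x_1,\dots,x_{4\ell})=1$ if and only if each block $b_i$ contains exactly two 1s. Then $Q_E(\mathrm{EXACT}_2^\ell)=2\ell$ and $D(\mathrm{EXACT}_2^\ell)=4\ell$.
   Context: $D(h)$ (exact classical query complexity / decision tree complexity) is the minimum depth of a decision tree computing $h$; a decision tree is a rooted binary tree whose internal vertices are labelled by input variables $x_i$ (query $x_i$, go to left child if $0$, right child if $1$) and whose leaves are labelled by output values $0$ or $1$; its depth is the maximum root-to-leaf path length. Quantum query model: a $t$-query quantum query algorithm on inputs $x\in\{0,1\}^m$ acts on a Hilbert space $\mathcal H_{\rm in}\otimes\mathcal H_{\rm work}\otimes\mathcal H_{\rm out}$, where $\mathcal H_{\rm in}$ has orthonormal basis $|0\rangle,\dots,|m\rangle$, $\mathcal H_{\rm work}$ is a finite-dimensional workspace of arbitrary size, and $\mathcal H_{\rm out}$ is one qubit. It is specified by input-independent unitaries $U_0,\dots,U_t$, and on input $x$ produces the state $U_tO_xU_{t-1}O_x\cdots O_xU_0|0\rangle$ ($t$ applications of $O_x$), where the oracle $O_x$ acts on $\mathcal H_{\rm in}$ by $|i\rangle\mapsto(-1)^{x_i}|i\rangle$ with the convention $x_0=0$ (and as the identity on the other registers). The output is obtained by measuring $\mathcal H_{\rm out}$ in the computational basis. The algorithm computes $h$ exactly if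 for every $x$ the output equals $h(x)$ with probability $1$. $Q_E(h)$ is the minimum $t$ such that some $t$-query quantum query algorithm computes $h$ exactly. *)

theory Defs
  imports Complex_Main
begin

text \<open>An input x in {0,1}^m is a bool list of length m; x_i (1 <= i <= m) is xs ! (i-1).
  A Boolean function h on m bits is a function on bool lists, only its values on
  lists of length m matter.\<close>

datatype dtree = Leaf bool | Node nat dtree dtree
  \<comment> \<open>Node i l r queries variable with list index i (i.e. x_(i+1)); left child if 0, right if 1\<close>

fun dt_eval :: "dtree \<Rightarrow> bool list \<Rightarrow> bool" where
  "dt_eval (Leaf b) xs = b"
| "dt_eval (Node i l r) xs = (if xs ! i then dt_eval r xs else dt_eval l xs)"

fun dt_depth :: "dtree \<Rightarrow> nat" where
  "dt_depth (Leaf b) = 0"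
| "dt_depth (Node i l r) = Suc (max (dt_depth l) (dt_depth r))"

fun dt_vars_ok :: "nat \<Rightarrow> dtree \<Rightarrow> bool" where
  "dt_vars_ok m (Leaf b) = True"
| "dt_vars_ok m (Node i l r) = (i < m \<and> dt_vars_ok m l \<and> dt_vars_ok m r)"

definition D :: "nat \<Rightarrow> (bool list \<Rightarrow> bool) \<Rightarrow> nat" where
  "D m h = (LEAST d. \<exists>t. dt_vars_ok m t \<and> dt_depth t = d \<and>
                        (\<forall>xs. length xs = m \<longrightarrow> dt_eval t xs = h xs))"

text \<open>Hilbert space H_in (x) H_work (x) H_out of dimension N = (m+1)*w*2, w >= 1 the workspace
  dimension. Basis state |i,j,b> (i <= m, j < w, b < 2) has index i*(2*w) + 2*j + b.
  Vectors are functions nat => complex (relevant on indices < N), operators are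
  N x N matrices given as functions nat => nat => complex.\<close>

definition qdim :: "nat \<Rightarrow> nat \<Rightarrow> nat" where
  "qdim m w = (m + 1) * w * 2"

definition mat_apply :: "nat \<Rightarrow> (nat \<Rightarrow> nat \<Rightarrow> complex) \<Rightarrow> (nat \<Rightarrow> complex) \<Rightarrow> (nat \<Rightarrow> complex)" where
  "mat_apply N U v = (\<lambda>i. if i < N then (\<Sum>j<N. U i j * v j) else 0)"

definition unitary_mat :: "nat \<Rightarrow> (nat \<Rightarrow> nat \<Rightarrow> complex) \<Rightarrow> bool" where
  "unitary_mat N U \<longleftrightarrow>
     (\<forall>i<N. \<forall>j<N. (\<Sum>k<N. cnj (U k i) * U k j) = (if i = j then 1 else 0))"

text \<open>Oracle O_x: |i,j,b> -> (-1)^(x_i) |i,j,b>, with x_0 = 0.\<close>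
definition oracle_apply :: "nat \<Rightarrow> bool list \<Rightarrow> (nat \<Rightarrow> complex) \<Rightarrow> (nat \<Rightarrow> complex)" where
  "oracle_apply w xs v = (\<lambda>s. let i = s div (2 * w) in
      if 1 \<le> i \<and> xs ! (i - 1) then - v s else v s)"

definition basis0 :: "nat \<Rightarrow> complex" where
  "basis0 = (\<lambda>s. if s = 0 then 1 else 0)"

fun qstate :: "nat \<Rightarrow> nat \<Rightarrow> (nat \<Rightarrow> nat \<Rightarrow> nat \<Rightarrow> complex) \<Rightarrow> bool list \<Rightarrow> nat \<Rightarrow> (nat \<Rightarrow> complex)" where
  "qstate m w U xs 0 = mat_apply (qdim m w) (U 0) basis0"
| "qstate m w U xs (Suc k) = mat_apply (qdim m w) (U (Suc k)) (oracle_apply w xs (qstate m w U xs k))"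

text \<open>Exact computation: measuring the output qubit (index bit s mod 2) yields h(x) with
  probability 1, i.e. all amplitudes with the wrong output bit vanish.\<close>
definition computes_exactly :: "nat \<Rightarrow> nat \<Rightarrow> nat \<Rightarrow> (nat \<Rightarrow> nat \<Rightarrow> nat \<Rightarrow> complex) \<Rightarrow> (bool list \<Rightarrow> bool) \<Rightarrow> bool" where
  "computes_exactly m w t U h \<longleftrightarrow>
     (\<forall>xs. length xs = m \<longrightarrow>
        (\<forall>s < qdim m w. (s mod 2 = 1) \<noteq> h xs \<longrightarrow> qstate m w U xs t s = 0))"

definition Q_E :: "nat \<Rightarrow> (bool list \<Rightarrow> bool) \<Rightarrow> nat" where
  "Q_E m h = (LEAST t. \<exists>w U. 0 < w \<and> (\<forall>k\<le>t. unitary_mat (qdim m w) (U k)) \<and>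
                              computes_exactly m w t U h)"

definition exact2 :: "nat \<Rightarrow> bool list \<Rightarrow> bool" where
  "exact2 l xs \<longleftrightarrow> (\<forall>i<l. length (filter id (take 4 (drop (4 * i) xs))) = 2)"

end

theory Submission
  imports Defs
begin


definition emb :: "nat \<Rightarrow> (nat \<Rightarrow> nat) \<Rightarrow> (nat \<Rightarrow> nat) \<Rightarrow> (nat \<Rightarrow> nat \<Rightarrow> complex) \<Rightarrow> nat \<Rightarrow> nat \<Rightarrow> complex" where
  "emb d \<iota> \<pi> M i j = (if i \<in> \<iota> ` {..<d} \<and> j \<in> \<iota> ` {..<d} then M (\<pi> i) (\<pi> j) else if i = j then 1 else 0)"

lemma mat_apply_emb:
  assumes inv: "\<And>a. a < d \<Longrightarrow> \<pi> (\<iota> a) = a" and bd: "\<And>a. a < d \<Longrightarrow> \<iota> a < N"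
  shows "mat_apply N (emb d \<iota> \<pi> M) v s =
    (if s < N then (if s \<in> \<iota> ` {..<d} then (\<Sum>b<d. M (\<pi> s) b * v (\<iota> b)) else v s) else 0)"
proof (cases "s < N")
  case True
  have inj: "inj_on \<iota> {..<d}" by (metis inj_on_inverseI inv lessThan_iff)
  have sub: "\<iota> ` {..<d} \<subseteq> {..<N}" using bd by auto
  show ?thesis
  proof (cases "s \<in> \<iota> ` {..<d}")
    case sin: True
    have "(\<Sum>j<N. emb d \<iota> \<pi> M s j * v j) = (\<Sum>j\<in>\<iota> ` {..<d}. emb d \<iota> \<pi> M s j * v j)"
    proof (rule sum.mono_neutral_right)
      show "\<forall>i\<in>{..<N} - \<iota> ` {..<d}. emb d \<iota> \<pi> M s i * v i = 0"
      proof
        fix k assume "k \<in> {..<N} - \<iota> ` {..<d}"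
        then have "k \<notin> \<iota> ` {..<d}" "k \<noteq> s" using sin by auto
        then show "emb d \<iota> \<pi> M s k * v k = 0" by (simp add: emb_def)
      qed
    qed (use sub in auto)
    also have "\<dots> = (\<Sum>b<d. emb d \<iota> \<pi> M s (\<iota> b) * v (\<iota> b))"
      by (rule sum.reindex[OF inj, unfolded comp_def])
    also have "\<dots> = (\<Sum>b<d. M (\<pi> s) b * v (\<iota> b))"
      by (rule sum.cong) (use sin inv in \<open>auto simp: emb_def\<close>)
    finally show ?thesis using True sin by (simp add: mat_apply_def)
  next
    case sout: False
    have "(\<Sum>j<N. emb d \<iota> \<pi> M s j * v j) = (\<Sum>j<N. (if s = j then v j else 0))"
      by (rule sum.cong) (use sout in \<open>auto simp: emb_def\<close>)
    also have "\<dots> = v s" using True by simp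
    finally show ?thesis using True sout by (simp add: mat_apply_def)
  qed
qed (simp add: mat_apply_def)

lemma unitary_emb:
  assumes inv: "\<And>a. a < d \<Longrightarrow> \<pi> (\<iota> a) = a" and bd: "\<And>a. a < d \<Longrightarrow> \<iota> a < N"
    and U: "unitary_mat d M"
  shows "unitary_mat N (emb d \<iota> \<pi> M)"
  unfolding unitary_mat_def
proof (intro allI impI)
  fix i j assume i: "i < N" and j: "j < N"
  let ?S = "\<iota> ` {..<d}" let ?E = "emb d \<iota> \<pi> M"
  have inj: "inj_on \<iota> {..<d}" by (metis inj_on_inverseI inv lessThan_iff)
  have sub: "?S \<subseteq> {..<N}" using bd by auto
  show "(\<Sum>k<N. cnj (?E k i) * ?E k j) = (if i = j then 1 else 0)"
  proof (cases "i \<in> ?S")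
    case iS: True
    show ?thesis
    proof (cases "j \<in> ?S")
      case jS: True
      have "(\<Sum>k<N. cnj (?E k i) * ?E k j) = (\<Sum>k\<in>?S. cnj (?E k i) * ?E k j)"
      proof (rule sum.mono_neutral_right)
        show "\<forall>k\<in>{..<N} - ?S. cnj (?E k i) * ?E k j = 0"
        proof
          fix k assume "k \<in> {..<N} - ?S"
          then have "k \<notin> ?S" "k \<noteq> i" using iS by auto
          then show "cnj (?E k i) * ?E k j = 0" by (simp add: emb_def)
        qed
      qed (use sub in auto)
      also have "\<dots> = (\<Sum>a<d. cnj (?E (\<iota> a) i) * ?E (\<iota> a) j)"
        by (rule sum.reindex[OF inj, unfolded comp_def])
      also have "\<dots> = (\<Sum>a<d. cnj (M a (\<pi> i)) * M a (\<pi> j))"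
        by (rule sum.cong) (use iS jS inv in \<open>auto simp: emb_def\<close>)
      also have "\<dots> = (if \<pi> i = \<pi> j then 1 else 0)"
        using U iS jS inv unfolding unitary_mat_def by auto
      also have "\<dots> = (if i = j then 1 else 0)" using iS jS inv by auto
      finally show ?thesis .
    next
      case jS: False
      have "(\<Sum>k<N. cnj (?E k i) * ?E k j) = (\<Sum>k<N. if k = j then cnj (?E j i) else 0)"
        by (rule sum.cong) (use jS in \<open>auto simp: emb_def\<close>)
      also have "\<dots> = cnj (?E j i)" using j by simp
      also have "\<dots> = 0" using iS jS by (auto simp: emb_def)
      finally show ?thesis using iS jS by auto
    qed
  next
    case iS: False
    have "(\<Sum>k<N. cnj (?E k i) * ?E k j) = (\<Sum>k<N. if k = i then ?E i j else 0)"
      by (rule sum.cong) (use iS in \<open>auto simp: emb_def\<close>)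
    also have "\<dots> = ?E i j" using i by simp
    also have "\<dots> = (if i = j then 1 else 0)" using iS by (auto simp: emb_def)
    finally show ?thesis .
  qed
qed

definition mprod :: "nat \<Rightarrow> (nat \<Rightarrow> nat \<Rightarrow> complex) \<Rightarrow> (nat \<Rightarrow> nat \<Rightarrow> complex) \<Rightarrow> nat \<Rightarrow> nat \<Rightarrow> complex" where
  "mprod N A B i j = (\<Sum>k<N. A i k * B k j)"

lemma mat_apply_mprod: "mat_apply N (mprod N A B) v = mat_apply N A (mat_apply N B v)"
proof (rule ext)
  fix i
  have "(\<Sum>j<N. (\<Sum>k<N. A i k * B k j) * v j) = (\<Sum>j<N. \<Sum>k<N. A i k * B k j * v j)"
    by (simp add: sum_distrib_right)
  also have "\<dots> = (\<Sum>k<N. \<Sum>j<N. A i k * B k j * v j)" by (rule sum.swap)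
  also have "\<dots> = (\<Sum>k<N. A i k * (\<Sum>j<N. B k j * v j))"
    by (simp add: sum_distrib_left mult.assoc)
  finally have "(\<Sum>j<N. (\<Sum>k<N. A i k * B k j) * v j) = (\<Sum>k<N. A i k * (\<Sum>j<N. B k j * v j))" .
  then show "mat_apply N (mprod N A B) v i = mat_apply N A (mat_apply N B v) i"
    by (simp add: mat_apply_def mprod_def)
qed

lemma unitary_mprod:
  assumes A: "unitary_mat N A" and B: "unitary_mat N B"
  shows "unitary_mat N (mprod N A B)"
  unfolding unitary_mat_def
proof (intro allI impI)
  fix i j assume i: "i < N" and j: "j < N"
  have "(\<Sum>k<N. cnj (mprod N A B k i) * mprod N A B k j)
      = (\<Sum>k<N. \<Sum>p<N. \<Sum>q<N. cnj (B p i) * B q j * (cnj (A k p) * A k q))"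
    by (simp add: mprod_def sum_distrib_left sum_distrib_right algebra_simps)
  also have "\<dots> = (\<Sum>p<N. \<Sum>k<N. \<Sum>q<N. cnj (B p i) * B q j * (cnj (A k p) * A k q))"
    by (rule sum.swap)
  also have "\<dots> = (\<Sum>p<N. \<Sum>q<N. \<Sum>k<N. cnj (B p i) * B q j * (cnj (A k p) * A k q))"
    by (rule sum.cong, simp, rule sum.swap)
  also have "\<dots> = (\<Sum>p<N. \<Sum>q<N. cnj (B p i) * B q j * (\<Sum>k<N. cnj (A k p) * A k q))"
    by (simp add: sum_distrib_left)
  also have "\<dots> = (\<Sum>p<N. \<Sum>q<N. if p = q then cnj (B p i) * B q j else 0)"
    by (rule sum.cong, simp, rule sum.cong) (use A in \<open>auto simp: unitary_mat_def\<close>)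
  also have "\<dots> = (\<Sum>p<N. cnj (B p i) * B p j)" by simp
  also have "\<dots> = (if i = j then 1 else 0)" using B i j by (simp add: unitary_mat_def)
  finally show "(\<Sum>k<N. cnj (mprod N A B k i) * mprod N A B k j) = (if i = j then 1 else 0)" .
qed


definition om :: complex where "om = Complex (-1/2) (sqrt 3 / 2)"
definition Vm :: "nat \<Rightarrow> nat \<Rightarrow> complex" where
 "Vm a b = [[0,1/2,1/2,1/2,1/2],[1/2,0,1/2,om/2,cnj om/2],[1/2,1/2,0,cnj om/2,om/2],
            [1/2,om/2,cnj om/2,0,1/2],[1/2,cnj om/2,om/2,1/2,0]] ! a ! b"
definition Rm :: "nat \<Rightarrow> nat \<Rightarrow> complex" where
 "Rm a b = (if a = 0 \<and> b = 0 then 0 else if a = 0 \<or> b = 0 then 1/2 else if a = b then 3/4 else -1/4)"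
definition Sm :: "nat \<Rightarrow> nat \<Rightarrow> complex" where
 "Sm a b = (if a = b then 0 else 1)"

lemma s3: "sqrt 3 * sqrt 3 = (3::real)" by simp

lemma unitary_Vm: "unitary_mat 5 Vm"
  unfolding unitary_mat_def
  by (auto simp: numeral_eq_Suc lessThan_Suc Vm_def less_Suc_eq om_def complex_eq_iff field_simps s3)

lemma unitary_Rm: "unitary_mat 5 Rm"
  unfolding unitary_mat_def
  by (auto simp: numeral_eq_Suc lessThan_Suc Rm_def less_Suc_eq)

lemma unitary_Sm: "unitary_mat 2 Sm"
  unfolding unitary_mat_def
  by (auto simp: numeral_eq_Suc lessThan_Suc Sm_def less_Suc_eq)

definition sg :: "bool \<Rightarrow> complex" where "sg b = (if b then -1 else 1)"
definition Pv :: "(nat \<Rightarrow> bool) \<Rightarrow> nat \<Rightarrow> complex" where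
  "Pv y a = (\<Sum>b<5. Vm a b * (if b = 0 then 0 else sg (y b) / 2))"
definition Zv :: "(nat \<Rightarrow> bool) \<Rightarrow> nat \<Rightarrow> complex" where
  "Zv y a = (if a = 0 then 1 else sg (y a)) * Pv y a"
definition Qv :: "(nat \<Rightarrow> bool) \<Rightarrow> nat \<Rightarrow> complex" where
  "Qv y a = (\<Sum>b<5. Rm a b * Zv y b)"

lemma block_false: "length (filter id [y 1, y 2, y 3, y 4]) \<noteq> 2 \<Longrightarrow> Qv y 0 = 0"
  apply (cases "y 1"; cases "y 2"; cases "y 3"; cases "y 4")
  by (simp_all add: Qv_def Zv_def Pv_def numeral_eq_Suc lessThan_Suc Vm_def Rm_def sg_def om_def complex_eq_iff field_simps s3)

lemma block_true: "length (filter id [y 1, y 2, y 3, y 4]) = 2 \<Longrightarrow> 0 < a \<Longrightarrow> a < 5 \<Longrightarrow> Qv y a = 0"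
  apply (cases "y 1"; cases "y 2"; cases "y 3"; cases "y 4")
  by (auto simp: Qv_def Zv_def Pv_def numeral_eq_Suc lessThan_Suc Vm_def Rm_def sg_def om_def complex_eq_iff field_simps s3 less_Suc_eq)


definition sigma :: "nat \<Rightarrow> bool list \<Rightarrow> complex" where "sigma i xs = (if xs ! i then -1 else 1)"
definition chi :: "nat set \<Rightarrow> bool list \<Rightarrow> complex" where "chi S xs = (\<Prod>i\<in>S. sigma i xs)"

inductive_set lowdeg :: "nat \<Rightarrow> nat \<Rightarrow> (bool list \<Rightarrow> complex) set" for m t where
  chr: "finite S \<Longrightarrow> S \<subseteq> {..<m} \<Longrightarrow> card S \<le> t \<Longrightarrow> chi S \<in> lowdeg m t"
| zero: "(\<lambda>_. 0) \<in> lowdeg m t"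
| add: "f \<in> lowdeg m t \<Longrightarrow> g \<in> lowdeg m t \<Longrightarrow> (\<lambda>x. f x + g x) \<in> lowdeg m t"
| smul: "f \<in> lowdeg m t \<Longrightarrow> (\<lambda>x. c * f x) \<in> lowdeg m t"

lemma sigma_sq: "sigma i x * sigma i x = 1" by (simp add: sigma_def)
lemma cnj_sigma: "cnj (sigma i x) = sigma i x" by (simp add: sigma_def)
lemma cnj_chi: "cnj (chi S x) = chi S x" by (simp add: chi_def cnj_sigma)
lemma chi_sq: "chi S x * chi S x = 1"
  by (simp add: chi_def prod.distrib[symmetric] sigma_sq)

lemma chi_mult: assumes "finite S" "finite T"
  shows "chi S x * chi T x = chi ((S - T) \<union> (T - S)) x"
proof -
  have a: "chi S x = chi (S \<inter> T) x * chi (S - T) x" unfolding chi_def by (rule prod.Int_Diff[OF assms(1)])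
  have b: "chi T x = chi (S \<inter> T) x * chi (T - S) x" unfolding chi_def
    using prod.Int_Diff[OF assms(2), of _ S] by (simp add: Int_commute)
  have c: "chi ((S - T) \<union> (T - S)) x = chi (S - T) x * chi (T - S) x" unfolding chi_def
    by (rule prod.union_disjoint) (use assms in auto)
  have "chi S x * chi T x = (chi (S \<inter> T) x * chi (S \<inter> T) x) * (chi (S - T) x * chi (T - S) x)"
    by (simp add: a b algebra_simps)
  then show ?thesis by (simp add: chi_sq c)
qed

lemma lowdeg_mono: "f \<in> lowdeg m t \<Longrightarrow> t \<le> t' \<Longrightarrow> f \<in> lowdeg m t'"
  by (induction rule: lowdeg.induct) (auto intro: lowdeg.intros)

lemma lowdeg_const: "(\<lambda>_. c) \<in> lowdeg m t"
proof -
  have "chi {} \<in> lowdeg m t" by (rule chr) auto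
  then have "(\<lambda>x. c * chi {} x) \<in> lowdeg m t" by (rule smul)
  then show ?thesis by (simp add: chi_def)
qed

lemma lowdeg_sum: "finite J \<Longrightarrow> (\<And>j. j \<in> J \<Longrightarrow> F j \<in> lowdeg m t) \<Longrightarrow> (\<lambda>x. \<Sum>j\<in>J. F j x) \<in> lowdeg m t"
proof (induction J rule: finite_induct)
  case empty then show ?case by (simp add: zero)
next
  case (insert a J)
  then show ?case using add[of "F a" m t "\<lambda>x. \<Sum>j\<in>J. F j x"] by simp
qed

lemma lowdeg_sigma:
  assumes "i < m" shows "f \<in> lowdeg m t \<Longrightarrow> (\<lambda>x. sigma i x * f x) \<in> lowdeg m (Suc t)"
proof (induction rule: lowdeg.induct)
  case (chr S)
  show ?case
  proof (cases "i \<in> S")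
    case True
    have "chi S x = sigma i x * chi (S - {i}) x" for x
      unfolding chi_def by (rule prod.remove[OF chr(1) True])
    then have e: "(\<lambda>x. sigma i x * chi S x) = chi (S - {i})"
      by (simp add: mult.assoc[symmetric] sigma_sq)
    have "card (S - {i}) \<le> card S" by (rule card_mono) (use chr in auto)
    then have "card (S - {i}) \<le> Suc t" using chr by simp
    then show ?thesis unfolding e by (intro lowdeg.chr) (use chr in auto)
  next
    case False
    have e: "(\<lambda>x. sigma i x * chi S x) = chi (insert i S)"
      unfolding chi_def using chr(1) False by (simp)
    have "card (insert i S) \<le> Suc t" using chr False by simp
    then show ?thesis unfolding e by (intro lowdeg.chr) (use chr assms in auto)
  qed
next
  case zero then show ?case by (simp add: lowdeg.zero)
next
  case (add f g)
  then show ?case using lowdeg.add[OF add.IH] by (simp add: distrib_left)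
next
  case (smul f c)
  then show ?case using lowdeg.smul[OF smul.IH, of c] by (simp add: algebra_simps)
qed

definition flip :: "nat \<Rightarrow> bool list \<Rightarrow> bool list" where "flip i xs = xs[i := \<not> xs ! i]"

lemma finite_L: "finite {xs :: bool list. length xs = m}"
  using finite_lists_length_eq[of "UNIV :: bool set" m] by simp

lemma sum_chi_zero:
  assumes R: "finite R" "i \<in> R" "i < m"
  shows "(\<Sum>xs\<in>{xs. length xs = m}. chi R xs) = 0"
proof -
  let ?L = "{xs :: bool list. length xs = m}"
  have ff: "flip i (flip i xs) = xs" if "length xs = m" for xs
    using that R by (simp add: flip_def)
  have lf: "length (flip i xs) = length xs" for xs by (simp add: flip_def)
  have chif: "chi R (flip i xs) = - chi R xs" if "length xs = m" for xs
  proof -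
    have "chi R (flip i xs) = sigma i (flip i xs) * chi (R - {i}) (flip i xs)"
      unfolding chi_def by (rule prod.remove[OF R(1,2)])
    also have "chi (R - {i}) (flip i xs) = chi (R - {i}) xs"
      unfolding chi_def by (rule prod.cong) (auto simp: sigma_def flip_def)
    also have "sigma i (flip i xs) = - sigma i xs" using that R by (simp add: sigma_def flip_def)
    also have "chi R xs = sigma i xs * chi (R - {i}) xs"
      unfolding chi_def by (rule prod.remove[OF R(1,2)])
    ultimately show ?thesis by simp
  qed
  have "(\<Sum>xs\<in>?L. chi R xs) = (\<Sum>xs\<in>?L. chi R (flip i xs))"
    by (rule sum.reindex_bij_witness[of _ "flip i" "flip i"]) (auto simp: ff lf)
  also have "\<dots> = - (\<Sum>xs\<in>?L. chi R xs)" by (simp add: chif sum_negf)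
  finally show ?thesis by simp
qed

abbreviation "Lm m \<equiv> {xs :: bool list. length xs = m}"

lemma orth_chi:
  assumes "finite S" "S \<subseteq> {..<m}" "card S \<le> t" "finite T" "T \<subseteq> {..<m}" "card T \<le> t" "2*t < m"
  shows "(\<Sum>xs\<in>Lm m. chi S xs * cnj (chi T xs) * chi {..<m} xs) = 0"
proof -
  let ?D = "(S - T) \<union> (T - S)"
  have fD: "finite ?D" using assms by auto
  have "card ?D \<le> card (S \<union> T)" by (rule card_mono) (use assms in auto)
  also have "\<dots> \<le> card S + card T" by (rule card_Un_le)
  finally have "card ?D < card {..<m}" using assms by simp
  then obtain i where i: "i \<in> {..<m}" "i \<notin> ?D"
    by (metis card_mono fD subsetI not_le)
  let ?R = "(?D - {..<m}) \<union> ({..<m} - ?D)"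
  have e: "chi S xs * cnj (chi T xs) * chi {..<m} xs = chi ?R xs" for xs
    using assms fD by (simp add: cnj_chi chi_mult)
  show ?thesis unfolding e
    by (rule sum_chi_zero[of _ i]) (use i fD in auto)
qed

lemma orth1:
  assumes "2*t < m"
  shows "g \<in> lowdeg m t \<Longrightarrow> finite S \<Longrightarrow> S \<subseteq> {..<m} \<Longrightarrow> card S \<le> t \<Longrightarrow>
    (\<Sum>xs\<in>Lm m. chi S xs * cnj (g xs) * chi {..<m} xs) = 0"
proof (induction rule: lowdeg.induct)
  case (chr T) then show ?case using orth_chi[of S m t T] assms by simp
next
  case zero then show ?case by simp
next
  case (add f g)
  then show ?case by (simp add: distrib_left distrib_right sum.distrib)
next
  case (smul f c)
  have "(\<Sum>xs\<in>Lm m. chi S xs * cnj (c * f xs) * chi {..<m} xs) = cnj c * (\<Sum>xs\<in>Lm m. chi S xs * cnj (f xs) * chi {..<m} xs)"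
    by (simp add: sum_distrib_left algebra_simps)
  then show ?case using smul by simp
qed

lemma orth:
  assumes "2*t < m" and g: "g \<in> lowdeg m t"
  shows "f \<in> lowdeg m t \<Longrightarrow> (\<Sum>xs\<in>Lm m. f xs * cnj (g xs) * chi {..<m} xs) = 0"
proof (induction rule: lowdeg.induct)
  case (chr S) then show ?case using orth1[OF assms(1) g] by simp
next
  case zero then show ?case by simp
next
  case (add f h)
  then show ?case by (simp add: distrib_left distrib_right sum.distrib)
next
  case (smul f c)
  have "(\<Sum>xs\<in>Lm m. c * f xs * cnj (g xs) * chi {..<m} xs) = c * (\<Sum>xs\<in>Lm m. f xs * cnj (g xs) * chi {..<m} xs)"
    by (simp add: sum_distrib_left algebra_simps)
  then show ?case using smul by simp
qed


lemma orc_sigma: "j < qdim m w \<Longrightarrow> 0 < w \<Longrightarrow>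
   oracle_apply w xs v j = (if 1 \<le> j div (2*w) then sigma (j div (2*w) - 1) xs else 1) * v j
   \<and> (1 \<le> j div (2*w) \<longrightarrow> j div (2*w) - 1 < m)"
proof -
  assume j: "j < qdim m w" and w: "0 < w"
  have "j < (m+1) * (2*w)" using j by (simp add: qdim_def mult.commute mult.left_commute)
  then have "j div (2*w) < m + 1" using w by (simp add: less_mult_imp_div_less)
  then show ?thesis by (auto simp: oracle_apply_def sigma_def Let_def)
qed

lemma qstate_lowdeg:
  assumes w: "0 < w"
  shows "(\<lambda>xs. qstate m w U xs k s) \<in> lowdeg m k"
proof (induction k arbitrary: s)
  case 0
  show ?case by (simp add: lowdeg_const)
next
  case (Suc k)
  let ?N = "qdim m w"
  show ?case
  proof (cases "s < ?N")
    case False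
    then show ?thesis by (simp add: mat_apply_def lowdeg.zero)
  next
    case True
    have each: "(\<lambda>xs. U (Suc k) s j * oracle_apply w xs (qstate m w U xs k) j) \<in> lowdeg m (Suc k)"
      if j: "j \<in> {..<?N}" for j
    proof -
      have o: "(\<lambda>xs. oracle_apply w xs (qstate m w U xs k) j) \<in> lowdeg m (Suc k)"
      proof (cases "1 \<le> j div (2*w)")
        case True
        have e: "(\<lambda>xs. oracle_apply w xs (qstate m w U xs k) j) = (\<lambda>xs. sigma (j div (2*w) - 1) xs * qstate m w U xs k j)"
          using orc_sigma[of j m w] j w True by auto
        show ?thesis unfolding e
          by (rule lowdeg_sigma[OF _ Suc.IH]) (use orc_sigma[of j m w] j w True in auto)
      next
        case False
        have e: "(\<lambda>xs. oracle_apply w xs (qstate m w U xs k) j) = (\<lambda>xs. qstate m w U xs k j)"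
          using orc_sigma[of j m w] j w False by auto
        show ?thesis unfolding e by (rule lowdeg_mono[OF Suc.IH]) simp
      qed
      show ?thesis by (rule smul[OF o])
    qed
    have "(\<lambda>xs. \<Sum>j\<in>{..<?N}. U (Suc k) s j * oracle_apply w xs (qstate m w U xs k) j) \<in> lowdeg m (Suc k)"
      by (rule lowdeg_sum) (use each in auto)
    then show ?thesis using True by (simp add: mat_apply_def)
  qed
qed

definition nrm :: "nat \<Rightarrow> (nat \<Rightarrow> complex) \<Rightarrow> complex" where "nrm N v = (\<Sum>i<N. v i * cnj (v i))"

lemma nrm_unitary:
  assumes U: "unitary_mat N U"
  shows "nrm N (mat_apply N U v) = nrm N v"
proof -
  have "nrm N (mat_apply N U v) = (\<Sum>i<N. (\<Sum>j<N. U i j * v j) * cnj (\<Sum>k<N. U i k * v k))"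
    by (simp add: nrm_def mat_apply_def)
  also have "\<dots> = (\<Sum>i<N. \<Sum>k<N. \<Sum>j<N. v j * cnj (v k) * (cnj (U i k) * U i j))"
    by (simp add: sum_distrib_left sum_distrib_right algebra_simps)
  also have "\<dots> = (\<Sum>k<N. \<Sum>i<N. \<Sum>j<N. v j * cnj (v k) * (cnj (U i k) * U i j))"
    by (rule sum.swap)
  also have "\<dots> = (\<Sum>k<N. \<Sum>j<N. \<Sum>i<N. v j * cnj (v k) * (cnj (U i k) * U i j))"
    by (rule sum.cong, simp, rule sum.swap)
  also have "\<dots> = (\<Sum>k<N. \<Sum>j<N. v j * cnj (v k) * (\<Sum>i<N. cnj (U i k) * U i j))"
    by (simp add: sum_distrib_left)
  also have "\<dots> = (\<Sum>k<N. \<Sum>j<N. if j = k then v j * cnj (v k) else 0)"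
    by (rule sum.cong, simp, rule sum.cong) (use U in \<open>auto simp: unitary_mat_def\<close>)
  also have "\<dots> = nrm N v" by (simp add: nrm_def)
  finally show ?thesis .
qed

lemma nrm_oracle: "nrm N (oracle_apply w xs v) = nrm N v"
  unfolding nrm_def by (rule sum.cong) (auto simp: oracle_apply_def Let_def)

lemma nrm_qstate:
  assumes N: "0 < qdim m w" and U: "\<forall>k\<le>t. unitary_mat (qdim m w) (U k)"
  shows "k \<le> t \<Longrightarrow> nrm (qdim m w) (qstate m w U xs k) = 1"
proof (induction k)
  case 0
  have "nrm (qdim m w) basis0 = 1"
  proof -
    have "nrm (qdim m w) basis0 = (\<Sum>i<qdim m w. if i = 0 then 1 else 0)"
      unfolding nrm_def by (rule sum.cong) (auto simp: basis0_def)
    then show ?thesis using N by simp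
  qed
  then show ?case using U nrm_unitary by simp
next
  case (Suc k)
  then show ?case using U nrm_unitary nrm_oracle by simp
qed


declare One_nat_def[simp del]

definition ib :: "nat \<Rightarrow> nat \<Rightarrow> nat" where "ib r a = (if a = 0 then 0 else 2*(4*r+a))"
definition pb :: "nat \<Rightarrow> nat \<Rightarrow> nat" where "pb r s = (if s = 0 then 0 else s div 2 - 4*r)"
definition Bset :: "nat \<Rightarrow> nat set" where "Bset r = {s. even s \<and> 4*r+1 \<le> s div 2 \<and> s div 2 \<le> 4*r+4}"
definition Jset :: "nat \<Rightarrow> nat set" where "Jset r = {s. even s \<and> 1 \<le> s div 2 \<and> s div 2 \<le> 4*r}"
definition ub :: "nat \<Rightarrow> nat \<Rightarrow> complex" where "ub r s = (if s \<in> Bset r then 1/2 else 0)"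
definition sgo :: "bool list \<Rightarrow> nat \<Rightarrow> complex" where
  "sgo xs s = (if 1 \<le> s div 2 \<and> xs ! (s div 2 - 1) then -1 else 1)"
definition yv :: "nat \<Rightarrow> bool list \<Rightarrow> nat \<Rightarrow> bool" where "yv r xs b = xs ! (4*r + b - 1)"

lemma pb_ib: "pb r (ib r a) = a" by (simp add: ib_def pb_def)
lemma ib_bd: "r < l \<Longrightarrow> a < 5 \<Longrightarrow> ib r a < qdim (4*l) 1" by (simp add: ib_def qdim_def)
lemma mem_S: "s \<in> ib r ` {..<5} \<longleftrightarrow> s = 0 \<or> s \<in> Bset r"
proof
  assume "s \<in> ib r ` {..<5}" then show "s = 0 \<or> s \<in> Bset r" by (auto simp: ib_def Bset_def)
next
  assume a: "s = 0 \<or> s \<in> Bset r"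
  show "s \<in> ib r ` {..<5}"
  proof (cases "s = 0")
    case True then show ?thesis by (force simp: ib_def)
  next
    case False
    then have "s \<in> Bset r" using a by auto
    then have "s = ib r (s div 2 - 4*r)" "s div 2 - 4*r < 5" by (auto simp: ib_def Bset_def)
    then show ?thesis by blast
  qed
qed
lemma ib_pb: "s \<in> Bset r \<Longrightarrow> ib r (pb r s) = s \<and> 0 < pb r s \<and> pb r s < 5"
  by (auto simp: ib_def pb_def Bset_def)
lemma ib_B: "0 < a \<Longrightarrow> a < 5 \<Longrightarrow> ib r a \<in> Bset r" by (auto simp: ib_def Bset_def)
lemma sgo_sq: "sgo xs s * sgo xs s = 1" by (simp add: sgo_def)
lemma sgo_ib: "0 < a \<Longrightarrow> sgo xs (ib r a) = sg (yv r xs a)" by (simp add: sgo_def ib_def sg_def yv_def)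
lemma sgo_0: "sgo xs 0 = 1" by (simp add: sgo_def)
lemma orc: "oracle_apply 1 xs v s = sgo xs s * v s" by (simp add: oracle_apply_def sgo_def Let_def)
lemma orc1: "oracle_apply (Suc 0) xs v s = sgo xs s * v s" using orc by (simp add: One_nat_def)
lemma BJ: "s \<in> Bset r \<Longrightarrow> s \<notin> Jset r" by (auto simp: Bset_def Jset_def)
lemma J_bd: "s \<in> Jset r \<Longrightarrow> r < l \<Longrightarrow> s < qdim (4*l) 1" by (auto simp: Jset_def qdim_def)
lemma B_bd: "s \<in> Bset r \<Longrightarrow> r < l \<Longrightarrow> s < qdim (4*l) 1" by (auto simp: Bset_def qdim_def)
lemma notJ01: "0 \<notin> Jset r" "1 \<notin> Jset r" "0 \<notin> Bset r" "1 \<notin> Bset r" by (auto simp: Jset_def Bset_def)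

definition Ablk where "Ablk r = emb 5 (ib r) (pb r) Rm"
definition Vblk where "Vblk r = emb 5 (ib r) (pb r) Vm"
definition Xm where "Xm = emb 2 id id Sm"
definition Tm where "Tm l r = (if r < l then Ablk r else Xm)"
definition Ualg :: "nat \<Rightarrow> nat \<Rightarrow> nat \<Rightarrow> nat \<Rightarrow> complex" where
  "Ualg l k = (if k = 0 then Ablk 0 else if odd k then Vblk (k div 2)
      else mprod (qdim (4*l) 1) (Tm l (k div 2)) (Ablk (k div 2 - 1)))"

lemma apply_blk:
  assumes "r < l"
  shows "mat_apply (qdim (4*l) 1) (emb 5 (ib r) (pb r) M) v s =
    (if s < qdim (4*l) 1 then (if s = 0 \<or> s \<in> Bset r then (\<Sum>b<5. M (pb r s) b * v (ib r b)) else v s) else 0)"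
  using mat_apply_emb[of 5 "pb r" "ib r" "qdim (4*l) 1" M v s] pb_ib ib_bd[OF assms] mem_S by auto

lemma apply_X:
  assumes "0 < l"
  shows "mat_apply (qdim (4*l) 1) Xm v s =
    (if s < qdim (4*l) 1 then (if s = 0 then v 1 else if s = 1 then v 0 else v s) else 0)"
proof -
  have "mat_apply (qdim (4*l) 1) Xm v s = (if s < qdim (4*l) 1 then (if s \<in> id ` {..<2} then (\<Sum>b<2. Sm (id s) b * v (id b)) else v s) else 0)"
    unfolding Xm_def by (rule mat_apply_emb) (use assms in \<open>auto simp: qdim_def\<close>)
  then show ?thesis by (auto simp: Sm_def numeral_eq_Suc lessThan_Suc less_Suc_eq One_nat_def)
qed

lemma unitary_Ualg: "0 < l \<Longrightarrow> k \<le> 2*l \<Longrightarrow> unitary_mat (qdim (4*l) 1) (Ualg l k)"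
proof -
  assume l: "0 < l" and k: "k \<le> 2*l"
  have UA: "unitary_mat (qdim (4*l) 1) (Ablk r)" if "r < l" for r
    unfolding Ablk_def by (rule unitary_emb[OF _ _ unitary_Rm]) (use pb_ib ib_bd[OF that] in auto)
  have UV: "unitary_mat (qdim (4*l) 1) (Vblk r)" if "r < l" for r
    unfolding Vblk_def by (rule unitary_emb[OF _ _ unitary_Vm]) (use pb_ib ib_bd[OF that] in auto)
  have UX: "unitary_mat (qdim (4*l) 1) Xm"
    unfolding Xm_def by (rule unitary_emb[OF _ _ unitary_Sm]) (use l in \<open>auto simp: qdim_def\<close>)
  have UT: "unitary_mat (qdim (4*l) 1) (Tm l r)" for r using UA UX by (simp add: Tm_def)
  show ?thesis
    using l k UA UV UT by (auto simp: Ualg_def intro!: unitary_mprod elim!: oddE)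
qed


lemma step_block:
  assumes r: "r < l"
    and psi: "\<And>s. \<psi> s = c * ub r s + g s" and gs: "\<And>s. g s \<noteq> 0 \<Longrightarrow> s \<in> Jset r"
  shows "mat_apply (qdim (4*l) 1) (Ablk r) (oracle_apply 1 xs (mat_apply (qdim (4*l) 1) (Vblk r) (oracle_apply 1 xs \<psi>))) s
     = (if s = 0 then c * Qv (yv r xs) 0 else if s \<in> Bset r then c * Qv (yv r xs) (pb r s) else g s)"
proof -
  let ?N = "qdim (4*l) 1" let ?y = "yv r xs"
  define p1 where "p1 = oracle_apply 1 xs \<psi>"
  define p2 where "p2 = mat_apply ?N (Vblk r) p1"
  define p3 where "p3 = oracle_apply 1 xs p2"
  have g0: "g s = 0" if "s \<notin> Jset r" for s using gs that by blast
  have p1s: "p1 s = sgo xs s * \<psi> s" for s by (simp add: p1_def orc)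
  have p1i: "p1 (ib r b) = c * (if b = 0 then 0 else sg (?y b) / 2)" if "b < 5" for b
  proof (cases "b = 0")
    case True then show ?thesis using g0[of 0] notJ01 notJ01 by (simp add: p1s psi ib_def ub_def)
  next
    case False
    then have B: "ib r b \<in> Bset r" using ib_B that by auto
    then show ?thesis using False g0[of "ib r b"] BJ[OF B] sgo_ib[of b xs r]
      by (simp add: p1s psi ub_def)
  qed
  have p2i: "p2 (ib r b) = c * Pv ?y b" if "b < 5" for b
  proof -
    have "ib r b = 0 \<or> ib r b \<in> Bset r" using ib_B[of b r] that by (cases "b = 0") (auto simp: ib_def)
    then have "p2 (ib r b) = (\<Sum>a<5. Vm b a * p1 (ib r a))"
      using ib_bd[OF r that] by (simp add: p2_def Vblk_def apply_blk[OF r] pb_ib)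
    also have "\<dots> = (\<Sum>a<5. c * (Vm b a * (if a = 0 then 0 else sg (?y a) / 2)))"
      by (rule sum.cong) (auto simp: p1i)
    finally show ?thesis by (simp add: Pv_def sum_distrib_left)
  qed
  have p3i: "p3 (ib r b) = c * Zv ?y b" if "b < 5" for b
    using p2i[OF that] sgo_ib[of b xs r] by (cases "b = 0") (auto simp: p3_def orc Zv_def ib_def sgo_0)
  have Nout: "s \<notin> Jset r \<and> s \<notin> Bset r" if "\<not> s < ?N" for s
    using that J_bd[OF _ r] B_bd[OF _ r] by blast
  show ?thesis
  proof (cases "s < ?N")
    case sN: True
    show ?thesis
    proof (cases "s = 0 \<or> s \<in> Bset r")
      case True
      have "mat_apply ?N (Ablk r) p3 s = (\<Sum>b<5. Rm (pb r s) b * p3 (ib r b))"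
        using sN True by (simp add: Ablk_def apply_blk[OF r])
      also have "\<dots> = (\<Sum>b<5. c * (Rm (pb r s) b * Zv ?y b))"
        by (rule sum.cong) (auto simp: p3i)
      also have "\<dots> = c * Qv ?y (pb r s)" by (simp add: Qv_def sum_distrib_left)
      finally show ?thesis using True by (auto simp: p3_def p2_def p1_def pb_def)
    next
      case False
      have "mat_apply ?N (Ablk r) p3 s = p3 s"
        using sN False by (simp add: Ablk_def apply_blk[OF r])
      also have "\<dots> = sgo xs s * sgo xs s * \<psi> s"
        using sN False by (simp add: p3_def orc p2_def Vblk_def apply_blk[OF r] p1s)
      also have "\<dots> = g s" using False by (simp add: sgo_sq psi ub_def)
      finally show ?thesis using False by (simp add: p3_def p2_def p1_def)
    qed
  next
    case False
    have "0 < ?N" by (simp add: qdim_def)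
    then have "s \<noteq> 0" using False by auto
    then show ?thesis using False Nout[OF False] g0[of s] by (simp add: Ablk_def apply_blk[OF r])
  qed
qed


definition allT :: "nat \<Rightarrow> bool list \<Rightarrow> bool" where
  "allT r xs = (\<forall>i<r. length (filter id (take 4 (drop (4*i) xs))) = 2)"
definition tgt :: "nat \<Rightarrow> nat \<Rightarrow> nat \<Rightarrow> complex" where
  "tgt l r s = (if r < l then ub r s else if s = 1 then 1 else 0)"
definition Inv :: "nat \<Rightarrow> bool list \<Rightarrow> nat \<Rightarrow> (nat \<Rightarrow> complex) \<Rightarrow> bool" where
  "Inv l xs r \<psi> = (\<exists>c g. (\<forall>s. \<psi> s = c * tgt l r s + g s) \<and> (\<forall>s. g s \<noteq> 0 \<longrightarrow> s \<in> Jset r)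
     \<and> (allT r xs \<longrightarrow> (\<forall>s. g s = 0)) \<and> (\<not> allT r xs \<longrightarrow> c = 0))"

lemma take4: "k + 4 \<le> length xs \<Longrightarrow> take 4 (drop k xs) = [xs!k, xs!(k+1), xs!(k+2), xs!(k+3)]"
proof (rule nth_equalityI)
  assume a: "k + 4 \<le> length xs"
  show "length (take 4 (drop k xs)) = length [xs!k, xs!(k+1), xs!(k+2), xs!(k+3)]" using a by simp
  fix i assume "i < length (take 4 (drop k xs))"
  then have "i < 4" by simp
  then have "i = 0 \<or> i = 1 \<or> i = 2 \<or> i = 3" by auto
  then show "take 4 (drop k xs) ! i = [xs!k, xs!(k+1), xs!(k+2), xs!(k+3)] ! i" using a
    by (auto simp: add.commute)
qed

lemma blk_eq: "length xs = 4*l \<Longrightarrow> r < l \<Longrightarrow>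
   length (filter id (take 4 (drop (4*r) xs))) = length (filter id [yv r xs 1, yv r xs 2, yv r xs 3, yv r xs 4])"
proof -
  assume a: "length xs = 4*l" "r < l"
  have "yv r xs 1 = xs!(4*r)" "yv r xs 2 = xs!(4*r+1)" "yv r xs 3 = xs!(4*r+2)" "yv r xs 4 = xs!(4*r+3)"
    unfolding yv_def by (auto intro!: arg_cong[where f="(!) xs"])
  moreover have "take 4 (drop (4*r) xs) = [xs!(4*r), xs!(4*r+1), xs!(4*r+2), xs!(4*r+3)]"
    by (rule take4) (use a in simp)
  ultimately show ?thesis by (simp only:)
qed

lemma BJ_sub: "s \<in> Bset r \<or> s \<in> Jset r \<Longrightarrow> s \<in> Jset (Suc r)" by (auto simp: Bset_def Jset_def)
lemma B_Suc: "s \<in> Bset (Suc r) \<Longrightarrow> s \<notin> Bset r \<and> s \<notin> Jset r \<and> s \<noteq> 0" by (auto simp: Bset_def Jset_def)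

lemma inv_step:
  assumes r: "Suc r \<le> l" and len: "length xs = 4*l" and I: "Inv l xs r \<psi>"
  shows "Inv l xs (Suc r) (mat_apply (qdim (4*l) 1) (mprod (qdim (4*l) 1) (Tm l (Suc r)) (Ablk r))
            (oracle_apply 1 xs (mat_apply (qdim (4*l) 1) (Vblk r) (oracle_apply 1 xs \<psi>))))"
proof -
  let ?N = "qdim (4*l) 1" let ?y = "yv r xs"
  have rl: "r < l" using r by simp
  obtain c g where psi: "\<And>s. \<psi> s = c * tgt l r s + g s" and gs: "\<And>s. g s \<noteq> 0 \<Longrightarrow> s \<in> Jset r"
    and gT: "allT r xs \<Longrightarrow> g s = 0" and cF: "\<not> allT r xs \<Longrightarrow> c = 0" for s
    using I unfolding Inv_def by blast
  have psi': "\<And>s. \<psi> s = c * ub r s + g s" using psi rl by (simp add: tgt_def)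
  define p4 where "p4 = mat_apply ?N (Ablk r) (oracle_apply 1 xs (mat_apply ?N (Vblk r) (oracle_apply 1 xs \<psi>)))"
  have p4: "p4 s = (if s = 0 then c * Qv ?y 0 else if s \<in> Bset r then c * Qv ?y (pb r s) else g s)" for s
    unfolding p4_def by (rule step_block[OF rl psi' gs])
  define c' where "c' = c * Qv ?y 0"
  define g' where "g' s = (if s \<in> Bset r then c * Qv ?y (pb r s) else g s)" for s
  have g0: "g s = 0" if "s \<notin> Jset r" for s using gs that by blast
  have main: "mat_apply ?N (Tm l (Suc r)) p4 s = c' * tgt l (Suc r) s + g' s" for s
  proof (cases "Suc r < l")
    case True
    have TA: "Tm l (Suc r) = Ablk (Suc r)" using True by (simp add: Tm_def)
    show ?thesis
    proof (cases "s < ?N \<and> (s = 0 \<or> s \<in> Bset (Suc r))")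
      case T2: True
      have "mat_apply ?N (Tm l (Suc r)) p4 s = (\<Sum>b<5. Rm (pb (Suc r) s) b * p4 (ib (Suc r) b))"
        using T2 by (simp add: TA Ablk_def apply_blk[OF True])
      also have "\<dots> = (\<Sum>b::nat<5. if b = 0 then Rm (pb (Suc r) s) 0 * c' else 0)"
      proof (rule sum.cong)
        fix b :: nat assume "b \<in> {..<5}"
        then show "Rm (pb (Suc r) s) b * p4 (ib (Suc r) b) = (if b = 0 then Rm (pb (Suc r) s) 0 * c' else 0)"
          using ib_B[of b "Suc r"] B_Suc[of "ib (Suc r) b" r] g0[of "ib (Suc r) b"]
          by (cases "b = 0") (auto simp: p4 c'_def ib_def)
      qed simp
      also have "\<dots> = Rm (pb (Suc r) s) 0 * c'" by simp
      finally show ?thesis using T2 True B_Suc[of s r] g0[of s] notJ01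
        by (auto simp: tgt_def ub_def g'_def Rm_def pb_def Bset_def)
    next
      case F2: False
      show ?thesis
      proof (cases "s < ?N")
        case True
        then have "s \<noteq> 0" "s \<notin> Bset (Suc r)" using F2 by auto
        then show ?thesis using True
          by (simp add: TA Ablk_def apply_blk[OF \<open>Suc r < l\<close>] p4 g'_def tgt_def ub_def \<open>Suc r < l\<close>)
      next
        case False
        then show ?thesis using B_bd[of s "Suc r" l] B_bd[of s r l] J_bd[of s r l] g0[of s] rl \<open>Suc r < l\<close>
          by (auto simp: TA Ablk_def apply_blk[OF \<open>Suc r < l\<close>] g'_def tgt_def ub_def)
      qed
    qed
  next
    case False
    then have lr: "Suc r = l" using r by simp
    have TX: "Tm l (Suc r) = Xm" using lr by (simp add: Tm_def)
    have l0: "0 < l" using r by simp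
    have e: "mat_apply ?N (Tm l (Suc r)) p4 s = (if s < ?N then (if s = 0 then p4 1 else if s = 1 then p4 0 else p4 s) else 0)"
      by (simp only: TX apply_X[OF l0])
    have tg: "tgt l (Suc r) s = (if s = 1 then 1 else 0)" using lr by (simp add: tgt_def)
    have "1 < ?N" by (simp add: qdim_def)
    then show ?thesis
      using e tg B_bd[of s r l] J_bd[of s r l] g0[of s] g0[of 1] notJ01 rl
      by (auto simp: p4 g'_def c'_def)
  qed
  show ?thesis unfolding Inv_def
  proof (intro exI conjI allI impI)
    show "mat_apply ?N (mprod ?N (Tm l (Suc r)) (Ablk r))
            (oracle_apply 1 xs (mat_apply ?N (Vblk r) (oracle_apply 1 xs \<psi>))) s = c' * tgt l (Suc r) s + g' s" for s
      using main[of s] by (simp add: mat_apply_mprod p4_def)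
    show "s \<in> Jset (Suc r)" if "g' s \<noteq> 0" for s
      using that gs[of s] BJ_sub[of s r] by (auto simp: g'_def split: if_splits)
    assume A: "allT (Suc r) xs"
    then have Ar: "allT r xs" and Bk: "length (filter id (take 4 (drop (4*r) xs))) = 2"
      by (auto simp: allT_def)
    have "length (filter id [?y 1, ?y 2, ?y 3, ?y 4]) = 2" using Bk blk_eq[OF len rl] by simp
    then show "g' s = 0" for s using gT[OF Ar] block_true[of ?y "pb r s"] ib_pb[of s r]
      by (auto simp: g'_def)
  next
    assume A: "\<not> allT (Suc r) xs"
    show "c' = 0"
    proof (cases "allT r xs")
      case True
      then have "length (filter id (take 4 (drop (4*r) xs))) \<noteq> 2"
        using A by (auto simp: allT_def less_Suc_eq)
      then have "length (filter id [?y 1, ?y 2, ?y 3, ?y 4]) \<noteq> 2" using blk_eq[OF len rl] by simp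
      then show ?thesis using block_false by (simp add: c'_def)
    next
      case False then show ?thesis using cF by (simp add: c'_def)
    qed
  qed
qed


lemma inv_base: assumes l0: "0 < l"
  shows "Inv l xs 0 (mat_apply (qdim (4*l) 1) (Ablk 0) basis0)"
  unfolding Inv_def
proof (intro exI[of _ 1] exI[of _ "\<lambda>_. 0"] conjI allI impI)
  fix s
  have sumb: "(\<Sum>b<5. Rm (pb 0 s) b * basis0 (ib 0 b)) = Rm (pb 0 s) 0"
  proof -
    have "(\<Sum>b<5. Rm (pb 0 s) b * basis0 (ib 0 b)) = (\<Sum>b::nat<5. if b = 0 then Rm (pb 0 s) 0 else 0)"
      by (rule sum.cong) (auto simp: basis0_def ib_def)
    then show ?thesis by simp
  qed
  show "mat_apply (qdim (4*l) 1) (Ablk 0) basis0 s = 1 * tgt l 0 s + 0"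
  proof -
    have e: "mat_apply (qdim (4*l) 1) (Ablk 0) basis0 s = (if s < qdim (4*l) 1 then (if s = 0 \<or> s \<in> Bset 0 then Rm (pb 0 s) 0 else basis0 s) else 0)"
      using sumb by (simp add: Ablk_def apply_blk[OF l0])
    show ?thesis
      using e B_bd[of s 0 l] l0 notJ01 ib_pb[of s 0]
      by (auto simp: tgt_def ub_def Rm_def basis0_def pb_def qdim_def)
  qed
qed (auto simp: allT_def)

lemma qinv:
  assumes l0: "0 < l" and len: "length xs = 4*l"
  shows "r \<le> l \<Longrightarrow> Inv l xs r (qstate (4*l) 1 (Ualg l) xs (2*r))"
proof (induction r)
  case 0
  then show ?case using inv_base[OF l0] by (simp add: Ualg_def)
next
  case (Suc r)
  have U1: "Ualg l (Suc (2*r)) = Vblk r" by (simp add: Ualg_def)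
  have U2: "Ualg l (Suc (Suc (2*r))) = mprod (qdim (4*l) 1) (Tm l (Suc r)) (Ablk r)" by (simp add: Ualg_def)
  have "2 * Suc r = Suc (Suc (2*r))" by simp
  then show ?case using inv_step[OF Suc.prems len Suc.IH] Suc.prems
    by (simp only: qstate.simps U1 U2)
qed

lemma upper_alg:
  assumes l0: "0 < l"
  shows "computes_exactly (4*l) 1 (2*l) (Ualg l) (exact2 l)"
  unfolding computes_exactly_def
proof (intro allI impI)
  fix xs s assume len: "length xs = 4*l" and sN: "s < qdim (4*l) 1" and wr: "(s mod 2 = 1) \<noteq> exact2 l xs"
  obtain c g where psi: "\<And>s. qstate (4*l) 1 (Ualg l) xs (2*l) s = c * tgt l l s + g s"
    and gs: "\<And>s. g s \<noteq> 0 \<Longrightarrow> s \<in> Jset l"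
    and gT: "allT l xs \<Longrightarrow> g s = 0" and cF: "\<not> allT l xs \<Longrightarrow> c = 0" for s
    using qinv[OF l0 len, of l] unfolding Inv_def by blast
  have ex: "exact2 l xs = allT l xs" by (simp add: exact2_def allT_def)
  show "qstate (4*l) 1 (Ualg l) xs (2*l) s = 0"
  proof (cases "allT l xs")
    case True
    then have "s \<noteq> 1" using wr ex by auto
    then show ?thesis using gT[OF True] by (simp add: psi tgt_def)
  next
    case False
    then have "odd s" using wr ex by auto
    then have "s \<notin> Jset l" by (auto simp: Jset_def)
    then show ?thesis using cF[OF False] gs[of s] by (auto simp: psi)
  qed
qed

declare One_nat_def[simp]

declare One_nat_def[simp]

lemma chi_len: "chi {..<length xs} xs = (-1) ^ length (filter id xs)"
proof (induction xs)
  case Nil then show ?case by (simp add: chi_def)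
next
  case (Cons b xs)
  have "chi {..<length (b # xs)} (b # xs) = sigma 0 (b # xs) * (\<Prod>i<length xs. sigma (Suc i) (b # xs))"
    unfolding chi_def by (simp add: prod.lessThan_Suc_shift del: prod.lessThan_Suc)
  also have "(\<Prod>i<length xs. sigma (Suc i) (b # xs)) = chi {..<length xs} xs"
    by (simp add: chi_def sigma_def)
  finally show ?case using Cons by (simp add: sigma_def)
qed

lemma count_blocks: "length xs = 4*l \<Longrightarrow> length (filter id xs) = (\<Sum>i<l. length (filter id (take 4 (drop (4*i) xs))))"
proof (induction l arbitrary: xs)
  case 0 then show ?case by simp
next
  case (Suc l)
  let ?ys = "take (4*l) xs" let ?zs = "drop (4*l) xs"
  have lys: "length ?ys = 4*l" using Suc.prems by simp
  have "length (filter id xs) = length (filter id ?ys) + length (filter id ?zs)"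
    by (metis append_take_drop_id filter_append length_append)
  also have "length (filter id ?ys) = (\<Sum>i<l. length (filter id (take 4 (drop (4*i) ?ys))))"
    by (rule Suc.IH[OF lys])
  also have "\<dots> = (\<Sum>i<l. length (filter id (take 4 (drop (4*i) xs))))"
  proof (rule sum.cong)
    fix i assume "i \<in> {..<l}"
    then have "min 4 (4*l - 4*i) = 4" by auto
    then show "length (filter id (take 4 (drop (4*i) ?ys))) = length (filter id (take 4 (drop (4*i) xs)))"
      by (simp add: drop_take take_take)
  qed simp
  also have "?zs = take 4 (drop (4*l) xs)" using Suc.prems by simp
  finally show ?case by simp
qed

lemma exact2_chi: "length xs = 4*l \<Longrightarrow> exact2 l xs \<Longrightarrow> chi {..<4*l} xs = 1"
proof -
  assume len: "length xs = 4*l" and ex: "exact2 l xs"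
  have "length (filter id xs) = (\<Sum>i<l. 2)"
    using count_blocks[OF len] ex by (simp add: exact2_def)
  then have "length (filter id xs) = 2*l" by simp
  then show ?thesis using chi_len[of xs] len by (simp add: power_mult)
qed

definition x0 :: "nat \<Rightarrow> bool list" where "x0 l = map (\<lambda>j. j mod 4 < 2) [0..<4*l]"

lemma x0_len: "length (x0 l) = 4*l" by (simp add: x0_def)

lemma x0_blk: "i < l \<Longrightarrow> take 4 (drop (4*i) (x0 l)) = [True, True, False, False]"
proof -
  assume i: "i < l"
  then have "4*i + 4 \<le> length (x0 l)" by (simp add: x0_len)
  then have e: "take 4 (drop (4*i) (x0 l)) = [x0 l ! (4*i), x0 l ! (4*i+1), x0 l ! (4*i+2), x0 l ! (4*i+3)]"
    by (rule take4)
  have "4*i+3 < 4*l" using i by simp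
  then show ?thesis unfolding e by (simp add: x0_def nth_append mod_Suc del: upt_Suc)
qed

lemma x0_exact: "exact2 l (x0 l)"
  by (simp add: exact2_def x0_blk)

lemma QE_lower:
  assumes w: "0 < w" and U: "\<forall>k\<le>t. unitary_mat (qdim (4*l) w) (U k)"
    and C: "computes_exactly (4*l) w t U (exact2 l)"
  shows "2*l \<le> t"
proof (rule ccontr)
  assume "\<not> 2*l \<le> t"
  then have tl: "2*t < 4*l" by simp
  let ?N = "qdim (4*l) w" let ?m = "4*l"
  define amp where "amp xs s = qstate ?m w U xs t s" for xs s
  define Od where "Od = {s. s < ?N \<and> odd s}"
  have N0: "0 < ?N" using w by (simp add: qdim_def)
  have fOd: "finite Od" by (simp add: Od_def)
  have F: "(\<Sum>s\<in>Od. amp xs s * cnj (amp xs s)) = (if exact2 l xs then 1 else 0)" if len: "length xs = ?m" for xs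
  proof (cases "exact2 l xs")
    case True
    have "(\<Sum>s\<in>Od. amp xs s * cnj (amp xs s)) = (\<Sum>s<?N. amp xs s * cnj (amp xs s))"
    proof (rule sum.mono_neutral_left)
      show "\<forall>s\<in>{..<?N} - Od. amp xs s * cnj (amp xs s) = 0"
        using C len True by (auto simp: computes_exactly_def amp_def Od_def)
    qed (auto simp: Od_def)
    also have "\<dots> = nrm ?N (qstate ?m w U xs t)" by (simp add: nrm_def amp_def)
    also have "\<dots> = 1" by (rule nrm_qstate[OF N0 U]) simp
    finally show ?thesis using True by simp
  next
    case False
    have "(\<Sum>s\<in>Od. amp xs s * cnj (amp xs s)) = (\<Sum>s\<in>Od. 0)"
      by (rule sum.cong) (use C len False in \<open>auto simp: computes_exactly_def amp_def Od_def odd_iff_mod_2_eq_one\<close>)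
    then show ?thesis using False by simp
  qed
  have LD: "(\<lambda>xs. amp xs s) \<in> lowdeg ?m t" for s
    unfolding amp_def by (rule qstate_lowdeg[OF w])
  have "(\<Sum>s\<in>Od. \<Sum>xs\<in>Lm ?m. amp xs s * cnj (amp xs s) * chi {..<?m} xs) = 0"
    using orth[OF tl LD LD] by simp
  also have "(\<Sum>s\<in>Od. \<Sum>xs\<in>Lm ?m. amp xs s * cnj (amp xs s) * chi {..<?m} xs)
      = (\<Sum>xs\<in>Lm ?m. (\<Sum>s\<in>Od. amp xs s * cnj (amp xs s)) * chi {..<?m} xs)"
    by (simp add: sum.swap[of _ Od] sum_distrib_right)
  also have "\<dots> = (\<Sum>xs\<in>Lm ?m. if exact2 l xs then 1 else 0)"
    by (rule sum.cong) (auto simp: F exact2_chi)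
  also have "\<dots> = of_nat (card {xs \<in> Lm ?m. exact2 l xs})"
    by (simp add: sum.If_cases[OF finite_L] Int_def)
  finally have c0: "card {xs \<in> Lm ?m. exact2 l xs} = 0" by simp
  have "finite {xs \<in> Lm ?m. exact2 l xs}" using finite_L by simp
  moreover have "x0 l \<in> {xs \<in> Lm ?m. exact2 l xs}" using x0_len x0_exact by simp
  ultimately have "card {xs \<in> Lm ?m. exact2 l xs} > 0" by (auto simp: card_gt_0_iff)
  then show False using c0 by simp
qed


declare One_nat_def[simp]

fun ft :: "(bool list \<Rightarrow> bool) \<Rightarrow> nat \<Rightarrow> bool list \<Rightarrow> dtree" where
  "ft h 0 pre = Leaf (h pre)"
| "ft h (Suc n) pre = Node (length pre) (ft h n (pre @ [False])) (ft h n (pre @ [True]))"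

lemma ft_depth: "dt_depth (ft h n pre) = n" by (induction n arbitrary: pre) auto
lemma ft_ok: "dt_vars_ok (length pre + n) (ft h n pre)"
proof (induction n arbitrary: pre)
  case 0 then show ?case by simp
next
  case (Suc n)
  have "dt_vars_ok (length (pre @ [b]) + n) (ft h n (pre @ [b]))" for b by (rule Suc.IH)
  then show ?case by simp
qed
lemma ft_eval: "length xs = length pre + n \<Longrightarrow> take (length pre) xs = pre \<Longrightarrow> dt_eval (ft h n pre) xs = h xs"
proof (induction n arbitrary: pre)
  case 0 then show ?case by simp
next
  case (Suc n)
  have lt: "length pre < length xs" using Suc.prems by simp
  have tk: "take (length (pre @ [xs ! length pre])) xs = pre @ [xs ! length pre]"
    using take_Suc_conv_app_nth[OF lt] Suc.prems by simp
  have IH: "dt_eval (ft h n (pre @ [xs ! length pre])) xs = h xs"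
  proof (rule Suc.IH)
    show "length xs = length (pre @ [xs ! length pre]) + n" using Suc.prems(1) by simp
  qed (rule tk)
  show ?case
  proof (cases "xs ! length pre")
    case True then show ?thesis using IH by simp
  next
    case False then show ?thesis using IH by simp
  qed
qed

fun pv :: "dtree \<Rightarrow> bool list \<Rightarrow> nat list" where
  "pv (Leaf b) xs = []"
| "pv (Node i l r) xs = i # (if xs ! i then pv r xs else pv l xs)"

lemma pv_len: "length (pv t xs) \<le> dt_depth t" by (induction t) auto
lemma pv_upd: "i \<notin> set (pv t xs) \<Longrightarrow> dt_eval t (xs[i := b]) = dt_eval t xs"
  by (induction t) auto

lemma x0_nth: "j < 4*l \<Longrightarrow> x0 l ! j = (j mod 4 < 2)" by (simp add: x0_def)

lemma x0_sens: assumes i: "i < 4*l" shows "\<not> exact2 l ((x0 l)[i := \<not> x0 l ! i])"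
proof
  assume ex: "exact2 l ((x0 l)[i := \<not> x0 l ! i])"
  let ?x1 = "(x0 l)[i := \<not> x0 l ! i]"
  define c where "c = i div 4"
  define d where "d = i mod 4"
  have i': "i = 4*c + d" "d < 4" by (simp_all add: c_def d_def)
  have cl: "c < l" using i by (simp add: c_def)
  have "4*c + 4 \<le> length ?x1" using cl by (simp add: x0_len)
  then have e: "take 4 (drop (4*c) ?x1) = [?x1!(4*c), ?x1!(4*c+1), ?x1!(4*c+2), ?x1!(4*c+3)]"
    by (rule take4)
  define f where "f e = (if e = d then \<not> (e < (2::nat)) else e < 2)" for e
  have nth1: "?x1 ! (4*c+e) = f e" if "e < 4" for e
  proof -
    have m: "(4*c+e) mod 4 = e" using that by simp
    have lt: "4*c+e < 4*l" using that cl by simp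
    have "?x1 ! (4*c+e) = (if i = 4*c+e then \<not> x0 l ! i else x0 l ! (4*c+e))"
      using lt by (simp add: x0_len nth_list_update)
    also have "\<dots> = f e" using i' lt m x0_nth[OF lt] by (auto simp: f_def)
    finally show ?thesis .
  qed
  have "length (filter id (take 4 (drop (4*c) ?x1))) = 2" using ex cl by (simp add: exact2_def)
  moreover have "?x1!(4*c) = f 0" using nth1[of 0] by simp
  moreover have "?x1!(4*c+1) = f 1" by (rule nth1) simp
  moreover have "?x1!(4*c+2) = f 2" by (rule nth1) simp
  moreover have "?x1!(4*c+3) = f 3" by (rule nth1) simp
  ultimately have "length (filter id [f 0, f 1, f 2, f 3]) = 2"
    unfolding e by (simp only:)
  moreover have "d = 0 \<or> d = 1 \<or> d = 2 \<or> d = 3" using i'(2) by auto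
  ultimately show False by (auto simp: f_def)
qed

lemma D_lower:
  assumes ok: "dt_vars_ok (4*l) t" and ev: "\<forall>xs. length xs = 4*l \<longrightarrow> dt_eval t xs = exact2 l xs"
  shows "4*l \<le> dt_depth t"
proof -
  have sub: "{..<4*l} \<subseteq> set (pv t (x0 l))"
  proof
    fix i assume "i \<in> {..<4*l}"
    then have i: "i < 4*l" by simp
    show "i \<in> set (pv t (x0 l))"
    proof (rule ccontr)
      assume "i \<notin> set (pv t (x0 l))"
      then have "dt_eval t ((x0 l)[i := \<not> x0 l ! i]) = dt_eval t (x0 l)" by (rule pv_upd)
      then show False using ev x0_len[of l] x0_exact[of l] x0_sens[OF i] by simp
    qed
  qed
  have "4*l = card {..<4*l}" by simp
  also have "\<dots> \<le> card (set (pv t (x0 l)))" by (rule card_mono) (use sub in auto)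
  also have "\<dots> \<le> length (pv t (x0 l))" by (rule card_length)
  also have "\<dots> \<le> dt_depth t" by (rule pv_len)
  finally show ?thesis .
qed

theorem theorem3p2:
  fixes l :: nat
  assumes "1 \<le> l"
  shows "Q_E (4 * l) (exact2 l) = 2 * l \<and> D (4 * l) (exact2 l) = 4 * l"
proof
  have l0: "0 < l" using assms by simp
  show "Q_E (4 * l) (exact2 l) = 2 * l"
    unfolding Q_E_def
  proof (rule Least_equality)
    show "\<exists>w U. 0 < w \<and> (\<forall>k\<le>2 * l. unitary_mat (qdim (4 * l) w) (U k)) \<and> computes_exactly (4 * l) w (2 * l) U (exact2 l)"
      using unitary_Ualg[OF l0] upper_alg[OF l0] by (intro exI[of _ 1] exI[of _ "Ualg l"]) auto
  next
    fix y assume "\<exists>w U. 0 < w \<and> (\<forall>k\<le>y. unitary_mat (qdim (4 * l) w) (U k)) \<and> computes_exactly (4 * l) w y U (exact2 l)"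
    then show "2 * l \<le> y" using QE_lower by blast
  qed
  show "D (4 * l) (exact2 l) = 4 * l"
    unfolding D_def
  proof (rule Least_equality)
    show "\<exists>t. dt_vars_ok (4 * l) t \<and> dt_depth t = 4 * l \<and> (\<forall>xs. length xs = 4 * l \<longrightarrow> dt_eval t xs = exact2 l xs)"
      using ft_ok[of "[]" "4*l" "exact2 l"] ft_depth[of "exact2 l" "4*l" "[]"] ft_eval[of _ "[]" "4*l" "exact2 l"]
      by (intro exI[of _ "ft (exact2 l) (4*l) []"]) auto
  next
    fix y assume "\<exists>t. dt_vars_ok (4 * l) t \<and> dt_depth t = y \<and> (\<forall>xs. length xs = 4 * l \<longrightarrow> dt_eval t xs = exact2 l xs)"
    then show "4 * l \<le> y" using D_lower by blast
  qed
qed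


end
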